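(* Let $\hat n_1,\hat n_2,\hat n_3$ be unit vectors in the $ZX$ plane of $\mathbb{R}^3$ (i.e. with vanishing $y$-component) forming trine axes, $\hat n_i\cdot\hat n_j=-1/2$ for $i\neq j$, and let $\eta$ satisfy $\tfrac23<\eta\le\sqrt3-1$. For $k\in\{1,2,3\}$ let $E^k_{\pm}=\tfrac12 I\pm\tfrac{\eta}{2}\vec\sigma\cdot\hat n_k$. Consider the quantity $$S(\rho,G)=\frac13\sum_{(ij)\in\{(12),(23),(13)\}}\mathrm{Tr}\big(\rho\,(G^{ij}_{+-}+G^{ij}_{-+})\big)-\Big(1-\frac{\eta}{3}\Big),$$ where $\rho$ ranges over qubit density operators and $G=(G_{12},G_{23},G_{13})$ over pairwise joint measurements. Then the maximum of $S$ is attained at $\rho=|\psi\rangle\langle\psi|$ with $|\psi\rangle=\tfrac1{\sqrt2}(|0\rangle+i|1\rangle)$ and the joint measurements with parameters $\alpha_{ij}=1+\eta^2\hat n_i\cdot\hat n_j$ and $\vec a_{ij}=\big(0,\sqrt{1+\eta^4(\hat n_i\cdot\hat n_j)^2-2\eta^2},0\big)$ for all pairs. Moreover, as $\eta\to\tfrac23$ this optimal violation tends to its supremum over the allowed range of $\eta$: then $\alpha_{ij}\to\tfrac79$, $|\vec a_{ij}|\to\tfrac{\sqrt{13}}{9}$, and the maximal value of $S$ tends to $\tfrac16\big(\tfrac{\sqrt{13}}{3}-1\big)\approx 0.03364$.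
   Context: $\vec\sigma=(\sigma_x,\sigma_y,\sigma_z)$ are the Pauli matrices, $I$ the $2\times2$ identity, $|0\rangle,|1\rangle$ the eigenvectors of $\sigma_z$. A pairwise joint measurement of $\{E^i_\pm\}$ and $\{E^j_\pm\}$ is a qubit POVM $G_{ij}=\{G^{ij}_{X_iX_j}\}_{X_i,X_j\in\{+,-\}}$ with $\sum_{X_j}G^{ij}_{X_iX_j}=E^i_{X_i}$ and $\sum_{X_i}G^{ij}_{X_iX_j}=E^j_{X_j}$. Every such joint measurement has the form $G^{ij}_{++}=\tfrac12\big[\tfrac{\alpha_{ij}}{2}I+\tfrac12\vec\sigma\cdot(\eta(\hat n_i+\hat n_j)-\vec a_{ij})\big]$, $G^{ij}_{+-}=\tfrac12\big[(1-\tfrac{\alpha_{ij}}{2})I+\tfrac12\vec\sigma\cdot(\eta(\hat n_i-\hat n_j)+\vec a_{ij})\big]$, $G^{ij}_{-+}=\tfrac12\big[(1-\tfrac{\alpha_{ij}}{2})I+\tfrac12\vec\sigma\cdot(\eta(-\hat n_i+\hat n_j)+\vec a_{ij})\big]$, $G^{ij}_{--}=\tfrac12\big[\tfrac{\alpha_{ij}}{2}I+\tfrac12\vec\sigma\cdot(-\eta(\hat n_i+\hat n_j)-\vec a_{ij})\big]$ for some $\alpha_{ij}\in\mathbb R$, $\vec a_{ij}\in\mathbb R^3$ (subject to positivity). The range $\tfrac23<\eta\le\sqrt3-1$ is exactly the range in which the three POVMs are pairwise but not triplewise jointly measurable. *)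

theory Defs
  imports "HOL-Analysis.Analysis"
begin

text \<open>Qubit operators are 2x2 complex matrices (type complex^2^2, indices 1 and 2);
  vectors of R^3 are real^3 with components x = $1, y = $2, z = $3.
  Matrix product is **, scalar multiplication of matrices is scal, of vectors *s.\<close>

definition mat2 :: "complex \<Rightarrow> complex \<Rightarrow> complex \<Rightarrow> complex \<Rightarrow> complex^2^2" where
  "mat2 a b c d = (\<chi> i j. if i = 1 then (if j = 1 then a else b) else (if j = 1 then c else d))"

definition scal :: "complex \<Rightarrow> complex^2^2 \<Rightarrow> complex^2^2" (infixr "*\<^sub>M" 75) where
  "c *\<^sub>M A = (\<chi> i j. c * A$i$j)"

definition Id2 :: "complex^2^2" where "Id2 = mat 1"

definition sigma_x :: "complex^2^2" where "sigma_x = mat2 0 1 1 0"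
definition sigma_y :: "complex^2^2" where "sigma_y = mat2 0 (-\<i>) \<i> 0"
definition sigma_z :: "complex^2^2" where "sigma_z = mat2 1 0 0 (-1)"

definition sigma_dot :: "real^3 \<Rightarrow> complex^2^2" where
  "sigma_dot v = complex_of_real (v$1) *\<^sub>M sigma_x
     + complex_of_real (v$2) *\<^sub>M sigma_y + complex_of_real (v$3) *\<^sub>M sigma_z"

definition psd :: "complex^2^2 \<Rightarrow> bool" where
  "psd A \<longleftrightarrow> (\<forall>i j. A$i$j = cnj (A$j$i)) \<and>
     (\<forall>v::complex^2. 0 \<le> Re (\<Sum>i\<in>UNIV. cnj (v$i) * (A *v v)$i))"

definition density :: "complex^2^2 \<Rightarrow> bool" where
  "density \<rho> \<longleftrightarrow> psd \<rho> \<and> trace \<rho> = 1"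

definition ket0 :: "complex^2" where "ket0 = (\<chi> i. if i = 1 then 1 else 0)"
definition ket1 :: "complex^2" where "ket1 = (\<chi> i. if i = 1 then 0 else 1)"
definition proj :: "complex^2 \<Rightarrow> complex^2^2" where
  "proj \<psi> = (\<chi> i j. \<psi>$i * cnj (\<psi>$j))"

text \<open>Outcomes: True stands for +, False for -.
  The dichotomic POVM E^k_{+-} = I/2 +- (eta/2) sigma.n_k.\<close>
definition E :: "real \<Rightarrow> real^3 \<Rightarrow> bool \<Rightarrow> complex^2^2" where
  "E \<eta> n x = (1/2) *\<^sub>M Id2 + (if x then 1 else -1) * complex_of_real (\<eta>/2) *\<^sub>M sigma_dot n"

definition povm4 :: "(bool \<Rightarrow> bool \<Rightarrow> complex^2^2) \<Rightarrow> bool" where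
  "povm4 G \<longleftrightarrow> (\<forall>x y. psd (G x y)) \<and> G True True + G True False + G False True + G False False = Id2"

definition joint_meas :: "real \<Rightarrow> real^3 \<Rightarrow> real^3 \<Rightarrow> (bool \<Rightarrow> bool \<Rightarrow> complex^2^2) \<Rightarrow> bool" where
  "joint_meas \<eta> ni nj G \<longleftrightarrow> povm4 G \<and>
     (\<forall>x. G x True + G x False = E \<eta> ni x) \<and>
     (\<forall>y. G True y + G False y = E \<eta> nj y)"

definition Gpar :: "real \<Rightarrow> real^3 \<Rightarrow> real^3 \<Rightarrow> real \<Rightarrow> real^3 \<Rightarrow> bool \<Rightarrow> bool \<Rightarrow> complex^2^2" where
  "Gpar \<eta> ni nj \<alpha> a x y =
    (if x \<and> y then (1/2) *\<^sub>M (complex_of_real (\<alpha>/2) *\<^sub>M Id2 + (1/2) *\<^sub>M sigma_dot (\<eta> *\<^sub>R (ni + nj) - a))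
     else if x \<and> \<not> y then (1/2) *\<^sub>M (complex_of_real (1 - \<alpha>/2) *\<^sub>M Id2 + (1/2) *\<^sub>M sigma_dot (\<eta> *\<^sub>R (ni - nj) + a))
     else if \<not> x \<and> y then (1/2) *\<^sub>M (complex_of_real (1 - \<alpha>/2) *\<^sub>M Id2 + (1/2) *\<^sub>M sigma_dot (\<eta> *\<^sub>R (nj - ni) + a))
     else (1/2) *\<^sub>M (complex_of_real (\<alpha>/2) *\<^sub>M Id2 + (1/2) *\<^sub>M sigma_dot (- (\<eta> *\<^sub>R (ni + nj)) - a)))"

definition S :: "real \<Rightarrow> complex^2^2 \<Rightarrow> (bool \<Rightarrow> bool \<Rightarrow> complex^2^2) \<Rightarrow>
    (bool \<Rightarrow> bool \<Rightarrow> complex^2^2) \<Rightarrow> (bool \<Rightarrow> bool \<Rightarrow> complex^2^2) \<Rightarrow> real" where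
  "S \<eta> \<rho> G12 G23 G13 =
     (1/3) * (Re (trace (\<rho> ** (G12 True False + G12 False True)))
            + Re (trace (\<rho> ** (G23 True False + G23 False True)))
            + Re (trace (\<rho> ** (G13 True False + G13 False True))))
     - (1 - \<eta>/3)"

definition alpha_opt :: "real \<Rightarrow> real^3 \<Rightarrow> real^3 \<Rightarrow> real" where
  "alpha_opt \<eta> ni nj = 1 + \<eta>^2 * (ni \<bullet> nj)"

definition a_opt :: "real \<Rightarrow> real^3 \<Rightarrow> real^3 \<Rightarrow> real^3" where
  "a_opt \<eta> ni nj = vector [0, sqrt (1 + \<eta>^4 * (ni \<bullet> nj)^2 - 2 * \<eta>^2), 0]"

definition psi_opt :: "complex^2" where
  "psi_opt = complex_of_real (1 / sqrt 2) *s (ket0 + \<i> *s ket1)"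

definition G_opt :: "real \<Rightarrow> real^3 \<Rightarrow> real^3 \<Rightarrow> bool \<Rightarrow> bool \<Rightarrow> complex^2^2" where
  "G_opt \<eta> ni nj = Gpar \<eta> ni nj (alpha_opt \<eta> ni nj) (a_opt \<eta> ni nj)"

end

theory Submission imports Defs begin

lemma mat2_eta: "(A::complex^2^2) = mat2 (A$1$1) (A$1$2) (A$2$1) (A$2$2)"
  unfolding mat2_def by (simp add: vec_eq_iff forall_2)

lemma mat2_nth[simp]: "mat2 a b c d $1$1 = a" "mat2 a b c d $1$2 = b"
  "mat2 a b c d $2$1 = c" "mat2 a b c d $2$2 = d"
  by (simp_all add: mat2_def)

lemma mat2_eq_iff: "mat2 a b c d = mat2 a' b' c' d' \<longleftrightarrow> a = a' \<and> b = b' \<and> c = c' \<and> d = d'"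
  by (metis mat2_nth)

lemma mat2_add: "mat2 a b c d + mat2 a' b' c' d' = mat2 (a+a') (b+b') (c+c') (d+d')"
  by (simp add: mat2_def vec_eq_iff forall_2)

lemma mat2_diff: "mat2 a b c d - mat2 a' b' c' d' = mat2 (a-a') (b-b') (c-c') (d-d')"
  by (simp add: mat2_def vec_eq_iff forall_2)

lemma mat2_uminus: "- mat2 a b c d = mat2 (-a) (-b) (-c) (-d)"
  by (simp add: mat2_def vec_eq_iff forall_2)

lemma mat2_scal: "k *\<^sub>M mat2 a b c d = mat2 (k*a) (k*b) (k*c) (k*d)"
  by (simp add: scal_def mat2_def vec_eq_iff forall_2)

lemma Id2_mat2: "Id2 = mat2 1 0 0 1"
  by (subst mat2_eta) (simp add: Id2_def mat_def)

lemma sigma_dot_mat2: "sigma_dot v = mat2 (complex_of_real (v$3)) (complex_of_real (v$1) - \<i> * complex_of_real (v$2))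
   (complex_of_real (v$1) + \<i> * complex_of_real (v$2)) (- complex_of_real (v$3))"
  unfolding sigma_dot_def sigma_x_def sigma_y_def sigma_z_def
  by (simp add: mat2_scal mat2_add algebra_simps)

lemma mat2_mult: "mat2 a b c d ** mat2 e f g h = mat2 (a*e+b*g) (a*f+b*h) (c*e+d*g) (c*f+d*h)"
  by (simp add: mat2_def vec_eq_iff forall_2 matrix_matrix_mult_def sum_2)

lemma trace_mat2: "trace (mat2 a b c d) = a + d"
  by (simp add: trace_def sum_2)

lemmas mat2_simps = mat2_add mat2_diff mat2_uminus mat2_scal Id2_mat2 sigma_dot_mat2 mat2_mult trace_mat2

definition herm :: "complex^2^2 \<Rightarrow> bool" where
  "herm A \<longleftrightarrow> (\<forall>i j. A$i$j = cnj (A$j$i))"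

definition b0 :: "complex^2^2 \<Rightarrow> real" where
  "b0 A = Re (A$1$1 + A$2$2) / 2"

definition bv :: "complex^2^2 \<Rightarrow> real^3" where
  "bv A = vector [Re (A$1$2 + A$2$1) / 2, Im (A$2$1 - A$1$2) / 2, Re (A$1$1 - A$2$2) / 2]"

lemma herm_mat2: "herm (mat2 a b c d) \<longleftrightarrow> Im a = 0 \<and> Im d = 0 \<and> b = cnj c"
  unfolding herm_def by (auto simp: forall_2 complex_eq_iff)

lemma b0_mat2: "b0 (mat2 a b c d) = Re (a + d) / 2"
  by (simp add: b0_def)

lemma bv_mat2: "bv (mat2 a b c d) = vector [Re (b + c) / 2, Im (c - b) / 2, Re (a - d) / 2]"
  by (simp add: bv_def)

lemma inner3: "(x::real^3) \<bullet> y = x$1*y$1 + x$2*y$2 + x$3*y$3"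
  by (simp add: inner_vec_def sum_3)

lemma vec3_eq: "(x::real^3) = y \<longleftrightarrow> x$1 = y$1 \<and> x$2 = y$2 \<and> x$3 = y$3"
  by (simp add: vec_eq_iff forall_3)

definition QF :: "complex^2^2 \<Rightarrow> complex^2 \<Rightarrow> real" where
  "QF A v = Re (\<Sum>i\<in>UNIV. cnj (v$i) * (A *v v)$i)"

lemma QF_mat2: "QF (mat2 a b c d) (vector [x, y]) = Re (cnj x * (a*x + b*y) + cnj y * (c*x + d*y))"
  by (simp add: QF_def sum_2 matrix_vector_mult_def)

lemma psd_QF: "psd A \<longleftrightarrow> herm A \<and> (\<forall>v. 0 \<le> QF A v)"
  by (simp add: psd_def herm_def QF_def)

lemma vec2_eta: "(v::complex^2) = vector [v$1, v$2]"
  by (simp add: vec_eq_iff forall_2)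

lemma cm2: "cmod x * cmod x = Re x * Re x + Im x * Im x"
  by (metis cmod_power2 power2_eq_square)

lemma QF_herm: "QF (mat2 (complex_of_real p) b (cnj b) (complex_of_real w)) (vector [x, y])
   = p * (cmod x)^2 + w * (cmod y)^2 + 2 * Re (cnj x * b * y)"
  unfolding QF_mat2 by (simp add: cm2 algebra_simps power2_eq_square)

lemma herm_form: assumes "herm A"
  shows "A = mat2 (complex_of_real (Re (A$1$1))) (A$1$2) (cnj (A$1$2)) (complex_of_real (Re (A$2$2)))"
proof -
  have "A = mat2 (A$1$1) (A$1$2) (A$2$1) (A$2$2)" by (rule mat2_eta)
  with assms have h: "Im (A$1$1) = 0" "Im (A$2$2) = 0" "A$1$2 = cnj (A$2$1)"
    using herm_mat2 by metis+
  show ?thesis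
    apply (subst mat2_eta)
    using h by (simp add: mat2_eq_iff complex_eq_iff)
qed

lemma psd_herm_iff:
  "(\<forall>v. 0 \<le> QF (mat2 (complex_of_real p) b (cnj b) (complex_of_real w)) v)
   \<longleftrightarrow> 0 \<le> p \<and> 0 \<le> w \<and> (cmod b)^2 \<le> p * w" (is "(\<forall>v. 0 \<le> ?Q v) \<longleftrightarrow> _")
proof
  assume H: "\<forall>v. 0 \<le> ?Q v"
  have q: "\<And>x y. 0 \<le> p * (cmod x)^2 + w * (cmod y)^2 + 2 * Re (cnj x * b * y)"
    using H QF_herm by metis
  have p0: "0 \<le> p" using q[of 1 0] by simp
  have w0: "0 \<le> w" using q[of 0 1] by simp
  have e1: "0 \<le> p * (p * w - (cmod b)^2)"
  proof -
    have "Re (cnj (- b) * b * complex_of_real p) = - p * (cmod b)^2"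
      by (simp add: cm2 algebra_simps power2_eq_square)
    then show ?thesis using q[of "-b" "complex_of_real p"] by (simp add: algebra_simps power2_eq_square)
  qed
  have e2: "0 \<le> w * (p * w - (cmod b)^2)"
  proof -
    have "Re (cnj (complex_of_real w) * b * (- cnj b)) = - w * (cmod b)^2"
      by (simp add: cm2 algebra_simps power2_eq_square)
    then show ?thesis using q[of "complex_of_real w" "- cnj b"] by (simp add: algebra_simps power2_eq_square)
  qed
  have e3: "0 \<le> p + w * (cmod b)^2 - 2 * (cmod b)^2"
  proof -
    have "Re (cnj 1 * b * (- cnj b)) = (cmod b)^2 * (-1)"
      by (simp add: cm2 algebra_simps power2_eq_square)
    then show ?thesis using q[of 1 "- cnj b"] by (simp add: algebra_simps power2_eq_square)
  qed
  have "(cmod b)^2 \<le> p * w"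
  proof (cases "p > 0")
    case True then show ?thesis using e1 by (simp add: zero_le_mult_iff)
  next
    case False
    then have pz: "p = 0" using p0 by simp
    show ?thesis
    proof (cases "w > 0")
      case True then show ?thesis using e2 by (simp add: zero_le_mult_iff)
    next
      case False
      then have "w = 0" using w0 by simp
      then show ?thesis using e3 pz by simp
    qed
  qed
  then show "0 \<le> p \<and> 0 \<le> w \<and> (cmod b)^2 \<le> p * w" using p0 w0 by simp
next
  assume H: "0 \<le> p \<and> 0 \<le> w \<and> (cmod b)^2 \<le> p * w"
  show "\<forall>v. 0 \<le> ?Q v"
  proof
    fix v :: "complex^2"
    obtain x y where v: "v = vector [x, y]" using vec2_eta by metis
    have Qv: "?Q v = p * (cmod x)^2 + w * (cmod y)^2 + 2 * Re (cnj x * b * y)"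
      using v QF_herm by simp
    show "0 \<le> ?Q v"
    proof (cases "p > 0")
      case True
      have id: "p * (p * (cmod x)^2 + w * (cmod y)^2 + 2 * Re (cnj x * b * y))
          = (cmod (complex_of_real p * x + b * y))^2 + (p * w - (cmod b)^2) * (cmod y)^2"
        by (simp add: cm2 algebra_simps power2_eq_square)
      have "0 \<le> (cmod (complex_of_real p * x + b * y))^2 + (p * w - (cmod b)^2) * (cmod y)^2"
        using H by simp
      then have "0 \<le> p * ?Q v" using id Qv by simp
      then show ?thesis using True by (simp add: zero_le_mult_iff)
    next
      case False
      then have "p = 0" using H by simp
      then have "cmod b = 0" using H by simp
      then have "b = 0" by simp
      then show ?thesis using Qv H by simp
    qed
  qed
qed

lemma psd_iff: "psd A \<longleftrightarrow> herm A \<and> norm (bv A) \<le> b0 A"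
proof (cases "herm A")
  case False then show ?thesis by (simp add: psd_QF)
next
  case True
  define p where "p = Re (A$1$1)"
  define w where "w = Re (A$2$2)"
  define b where "b = A$1$2"
  have A: "A = mat2 (complex_of_real p) b (cnj b) (complex_of_real w)"
    using herm_form[OF True] p_def w_def b_def by simp
  have "psd A \<longleftrightarrow> 0 \<le> p \<and> 0 \<le> w \<and> (cmod b)^2 \<le> p * w"
    using True psd_herm_iff A psd_QF by metis
  moreover have "norm (bv A) \<le> b0 A \<longleftrightarrow> 0 \<le> p + w \<and> (cmod b)^2 \<le> p * w"
  proof -
    have i: "bv A \<bullet> bv A = (Re b)^2 + (Im b)^2 + ((p - w)/2)^2"
      by (simp add: A bv_mat2 inner3 power2_eq_square)
    have bb: "b0 A = (p + w) / 2" by (simp add: A b0_mat2)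
    have d: "((p+w)/2)^2 - ((p-w)/2)^2 = p*w" by (simp add: power2_eq_square field_simps)
    have c: "(cmod b)^2 = (Re b)^2 + (Im b)^2" by (simp add: cmod_power2)
    show ?thesis unfolding norm_le_square i bb c using d by auto
  qed
  moreover have "0 \<le> p + w \<and> (cmod b)^2 \<le> p * w \<longleftrightarrow> 0 \<le> p \<and> 0 \<le> w \<and> (cmod b)^2 \<le> p * w"
  proof -
    have "(cmod b)^2 \<le> p * w \<Longrightarrow> 0 \<le> p * w" by (metis order_trans zero_le_power2)
    then show ?thesis by (auto simp: zero_le_mult_iff)
  qed
  ultimately show ?thesis using True by simp
qed

lemma trace_bloch0:
  "Re (trace (mat2 (complex_of_real p) b (cnj b) (complex_of_real w) ** mat2 (complex_of_real p') b' (cnj b') (complex_of_real w')))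
   = 2 * (b0 (mat2 (complex_of_real p) b (cnj b) (complex_of_real w)) * b0 (mat2 (complex_of_real p') b' (cnj b') (complex_of_real w'))
     + bv (mat2 (complex_of_real p) b (cnj b) (complex_of_real w)) \<bullet> bv (mat2 (complex_of_real p') b' (cnj b') (complex_of_real w')))"
  by (simp add: mat2_mult trace_mat2 b0_mat2 bv_mat2 inner3 algebra_simps) (simp add: field_simps)

lemma trace_bloch: assumes "herm A" "herm B"
  shows "Re (trace (A ** B)) = 2 * (b0 A * b0 B + bv A \<bullet> bv B)"
proof -
  obtain p b w where A: "A = mat2 (complex_of_real p) b (cnj b) (complex_of_real w)"
    using herm_form[OF assms(1)] by blast
  obtain p' b' w' where B: "B = mat2 (complex_of_real p') b' (cnj b') (complex_of_real w')"
    using herm_form[OF assms(2)] by blast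
  show ?thesis unfolding A B by (rule trace_bloch0)
qed

lemma b0_trace: "b0 A = Re (trace A) / 2"
  by (simp add: b0_def trace_def sum_2)

lemma b0_add: "b0 (A + B) = b0 A + b0 B"
  by (simp add: b0_def field_simps)

lemma bv_add: "bv (A + B) = bv A + bv B"
  by (simp add: bv_def vec3_eq field_simps)

lemma herm_add: "herm A \<Longrightarrow> herm B \<Longrightarrow> herm (A + B)"
  unfolding herm_def by (metis complex_cnj_add vector_add_component)


lemma one_mat2: "(1::complex^2^2) = mat2 1 1 1 1"
  by (simp add: mat2_def vec_eq_iff forall_2)

lemma times_mat2: "mat2 a b c d * mat2 e f g h = mat2 (a*e) (b*f) (c*g) (d*h)"
  by (simp add: mat2_def vec_eq_iff forall_2)

lemma E_T: "E \<eta> n True = mat2 (1/2 + complex_of_real (\<eta>/2 * n$3))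
    (complex_of_real (\<eta>/2) * (complex_of_real (n$1) - \<i> * complex_of_real (n$2)))
    (complex_of_real (\<eta>/2) * (complex_of_real (n$1) + \<i> * complex_of_real (n$2)))
    (1/2 - complex_of_real (\<eta>/2 * n$3))"
  unfolding E_def by (simp add: mat2_simps one_mat2 times_mat2 algebra_simps)

lemma E_F: "E \<eta> n False = mat2 (1/2 - complex_of_real (\<eta>/2 * n$3))
    (- complex_of_real (\<eta>/2) * (complex_of_real (n$1) - \<i> * complex_of_real (n$2)))
    (- complex_of_real (\<eta>/2) * (complex_of_real (n$1) + \<i> * complex_of_real (n$2)))
    (1/2 + complex_of_real (\<eta>/2 * n$3))"
  unfolding E_def by (simp add: mat2_simps one_mat2 times_mat2 algebra_simps)

lemma E_bloch: "b0 (E \<eta> n x) = 1/2" "bv (E \<eta> n x) = (if x then \<eta>/2 else -(\<eta>/2)) *\<^sub>R n"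
  by (cases x; simp add: E_T E_F b0_mat2 bv_mat2 vec3_eq algebra_simps)+

lemma parallelogram3: fixes z u :: "real^3"
  assumes "norm (z + u) \<le> a" "norm (z - u) \<le> a"
  shows "(norm z)^2 + (norm u)^2 \<le> a^2"
proof -
  have a0: "0 \<le> a" using assms(1) norm_ge_zero order_trans by blast
  have "(norm (z + u))^2 \<le> a^2" using assms(1) by (simp add: power_mono)
  moreover have "(norm (z - u))^2 \<le> a^2" using assms(2) by (simp add: power_mono)
  moreover have "(norm (z + u))^2 + (norm (z - u))^2 = 2 * (norm z)^2 + 2 * (norm u)^2"
    by (simp add: power2_norm_eq_inner inner_add_left inner_add_right inner_diff_left inner_diff_right inner_commute)
  ultimately show ?thesis by linarith
qed

lemma key_real: fixes A s a c k1 k2 :: real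
  assumes k: "0 \<le> k1" and "0 \<le> A" "0 \<le> 1 - A" "0 \<le> s" "0 \<le> c" "0 \<le> a" "0 \<le> 1 - a"
    "a^2 = c^2 + k1" "(1-a)^2 = c^2 + k2" "s^2 + k1 \<le> A^2" "s^2 + k2 \<le> (1-A)^2"
  shows "a - c \<le> A - s"
proof -
  have sc: "s \<le> c"
  proof (rule ccontr)
    assume "\<not> s \<le> c"
    then have "c^2 < s^2" using assms(5) by (simp add: power_strict_mono)
    then have h1: "a^2 < A^2" and h2: "(1-a)^2 < (1-A)^2" using assms by linarith+
    have "a < A" using power_less_imp_less_base[OF h1 assms(2)] .
    moreover have "1 - a < 1 - A" using power_less_imp_less_base[OF h2 assms(3)] .
    ultimately show False by linarith
  qed
  have "c^2 \<le> a^2" using assms(8) k by simp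
  then have ac: "c \<le> a" using assms(6) by (rule power2_le_imp_le)
  show ?thesis
  proof (rule ccontr)
    assume "\<not> a - c \<le> A - s"
    then have "A < a - c + s" by simp
    then have "A^2 < (a - c + s)^2" using assms(2) by (simp add: power_strict_mono)
    moreover have "(a - c + s)^2 \<le> s^2 + k1"
    proof -
      have "(a - c + s)^2 - (s^2 + k1) = (a - c)^2 + 2*(a-c)* s - (a^2 - c^2)"
        using assms(8) by (simp add: power2_eq_square algebra_simps)
      also have "\<dots> = 2 * (a - c) * (s - c)" by (simp add: power2_eq_square algebra_simps)
      also have "\<dots> \<le> 0" using ac sc by (simp add: mult_nonneg_nonpos)
      finally show ?thesis by simp
    qed
    ultimately show False using assms(10) by linarith
  qed
qed


lemma g_nonneg: fixes \<eta> :: real assumes "0 < \<eta>" "\<eta> \<le> sqrt 3 - 1"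
  shows "0 \<le> 1 + \<eta>^4/4 - 2*\<eta>^2"
proof -
  have s3: "(sqrt 3)^2 = 3" by simp
  have "0 \<le> sqrt 3 - 1" using assms by linarith
  have "\<eta>^2 \<le> (sqrt 3 - 1)^2" using assms by (simp add: power_mono)
  also have "\<dots> = 4 - 2 * sqrt 3" using s3 by (simp add: power2_eq_square algebra_simps)
  finally have h: "sqrt 3 \<le> 2 - \<eta>^2/2" by simp
  have "(sqrt 3)^2 \<le> (2 - \<eta>^2/2)^2" by (rule power_mono[OF h]) simp
  then have "3 \<le> (2 - \<eta>^2/2)^2" using s3 by simp
  moreover have "(2 - \<eta>^2/2)^2 = 4 - 2*\<eta>^2 + \<eta>^4/4" by (simp add: power2_eq_square power4_eq_xxxx algebra_simps)
  ultimately show ?thesis by simp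
qed

lemma density_bloch: assumes "density \<rho>"
  shows "herm \<rho>" "b0 \<rho> = 1/2" "norm (bv \<rho>) \<le> 1/2"
proof -
  show h: "herm \<rho>" "b0 \<rho> = 1/2" using assms psd_iff b0_trace by (auto simp: density_def)
  show "norm (bv \<rho>) \<le> 1/2" using assms psd_iff h by (auto simp: density_def)
qed

lemma norm_sum_sq: fixes a b :: "real^3" shows "(norm (a + b))^2 = (norm a)^2 + (norm b)^2 + 2 * (a \<bullet> b)"
  by (simp add: power2_norm_eq_inner inner_add_left inner_add_right inner_commute)

lemma norm_diff_sq: fixes a b :: "real^3" shows "(norm (a - b))^2 = (norm a)^2 + (norm b)^2 - 2 * (a \<bullet> b)"
  by (simp add: power2_norm_eq_inner inner_diff_left inner_diff_right inner_commute)

lemma pair_bound: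
  fixes ni nj :: "real^3" and \<eta> :: real
  assumes J: "joint_meas \<eta> ni nj G" and D: "density \<rho>"
    and u: "norm ni = 1" "norm nj = 1" "ni \<bullet> nj = -1/2" and e: "0 < \<eta>" "\<eta> \<le> sqrt 3 - 1"
  shows "Re (trace (\<rho> ** (G True False + G False True))) \<le> 1/2 + \<eta>^2/4 + sqrt (1 + \<eta>^4/4 - 2*\<eta>^2)/2"
proof -
  from J have P: "\<forall>x y. psd (G x y)" and s1: "G True True + G True False = E \<eta> ni True"
    and s2: "G False True + G False False = E \<eta> ni False" and s3: "G True True + G False True = E \<eta> nj True"
    by (auto simp: joint_meas_def povm4_def)
  have H: "\<And>x y. herm (G x y)" and N: "\<And>x y. norm (bv (G x y)) \<le> b0 (G x y)"
    using P psd_iff by auto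
  define x0 where "x0 = b0 (G True True)"
  define x where "x = bv (G True True)"
  have b1: "b0 (G True False) = 1/2 - x0"
    using arg_cong[OF s1, of b0] unfolding b0_add E_bloch x0_def by simp
  have v1: "bv (G True False) = (\<eta>/2) *\<^sub>R ni - x"
    using arg_cong[OF s1, of bv] unfolding bv_add E_bloch x_def by (simp add: algebra_simps)
  have b2: "b0 (G False True) = 1/2 - x0"
    using arg_cong[OF s3, of b0] unfolding b0_add E_bloch x0_def by simp
  have v2: "bv (G False True) = (\<eta>/2) *\<^sub>R nj - x"
    using arg_cong[OF s3, of bv] unfolding bv_add E_bloch x_def by (simp add: algebra_simps)
  have b3: "b0 (G False False) = x0"
    using arg_cong[OF s2, of b0] unfolding b0_add E_bloch b2 by simp
  have v3: "bv (G False False) = - (\<eta>/2) *\<^sub>R ni - ((\<eta>/2) *\<^sub>R nj - x)"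
    using arg_cong[OF s2, of bv] unfolding bv_add E_bloch v2 by (simp add: algebra_simps)
  have rh: "herm \<rho>" and r0: "b0 \<rho> = 1/2" and rn: "norm (bv \<rho>) \<le> 1/2"
    using density_bloch[OF D] by auto
  define r where "r = bv \<rho>"
  define z where "z = (\<eta>/2) *\<^sub>R ni + (\<eta>/2) *\<^sub>R nj - 2 *\<^sub>R x"
  define uu where "uu = (\<eta>/2) *\<^sub>R (ni + nj)"
  define vv where "vv = (\<eta>/2) *\<^sub>R (ni - nj)"
  have T: "Re (trace (\<rho> ** (G True False + G False True))) = 1 - 2 * x0 + 2 * (r \<bullet> z)"
  proof -
    have "Re (trace (\<rho> ** (G True False + G False True)))
       = 2 * (b0 \<rho> * b0 (G True False + G False True) + bv \<rho> \<bullet> bv (G True False + G False True))"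
      by (rule trace_bloch[OF rh herm_add[OF H H]])
    also have "\<dots> = 1 - 2 * x0 + r \<bullet> (2 *\<^sub>R ((\<eta>/2) *\<^sub>R ni - x + ((\<eta>/2) *\<^sub>R nj - x)))"
      unfolding b0_add bv_add b1 b2 v1 v2 r0 r_def by (simp add: algebra_simps)
    also have "2 *\<^sub>R ((\<eta>/2) *\<^sub>R ni - x + ((\<eta>/2) *\<^sub>R nj - x)) = 2 *\<^sub>R z"
      unfolding z_def by (simp add: vec3_eq algebra_simps)
    finally show ?thesis by simp
  qed
  have "r \<bullet> z \<le> norm r * norm z" by (rule norm_cauchy_schwarz)
  also have "\<dots> \<le> (1/2) * norm z" using mult_right_mono[OF rn norm_ge_zero[of z]] r_def by simp
  finally have T2: "Re (trace (\<rho> ** (G True False + G False True))) \<le> 1 - 2 * x0 + norm z"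
    using T by linarith
  have c1: "norm (z - uu) \<le> 2 * x0"
  proof -
    have "z - uu = (-2) *\<^sub>R x" unfolding z_def uu_def by (simp add: vec3_eq algebra_simps)
    then have "norm (z - uu) = 2 * norm x" by simp
    then show ?thesis using N[of True True] x_def x0_def by simp
  qed
  have c2: "norm (z + uu) \<le> 2 * x0"
  proof -
    have "z + uu = (-2) *\<^sub>R bv (G False False)" unfolding v3 z_def uu_def by (simp add: vec3_eq algebra_simps)
    then have "norm (z + uu) = 2 * norm (bv (G False False))" by simp
    then show ?thesis using N[of False False] b3 by simp
  qed
  have c3: "norm (z + vv) \<le> 1 - 2 * x0"
  proof -
    have "z + vv = 2 *\<^sub>R bv (G True False)" unfolding v1 z_def vv_def by (simp add: vec3_eq algebra_simps)
    then have "norm (z + vv) = 2 * norm (bv (G True False))" by simp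
    then show ?thesis using N[of True False] b1 by simp
  qed
  have c4: "norm (z - vv) \<le> 1 - 2 * x0"
  proof -
    have "z - vv = 2 *\<^sub>R bv (G False True)" unfolding v2 z_def vv_def by (simp add: vec3_eq algebra_simps)
    then have "norm (z - vv) = 2 * norm (bv (G False True))" by simp
    then show ?thesis using N[of False True] b2 by simp
  qed
  have nu: "(norm uu)^2 = \<eta>^2/4"
  proof -
    have "(norm (ni + nj))^2 = 1" using norm_sum_sq[of ni nj] u by simp
    then show ?thesis unfolding uu_def by (simp add: power_mult_distrib power_divide)
  qed
  have nv: "(norm vv)^2 = 3 * \<eta>^2/4"
  proof -
    have "(norm (ni - nj))^2 = 3" using norm_diff_sq[of ni nj] u by simp
    then show ?thesis unfolding vv_def by (simp add: power_mult_distrib power_divide)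
  qed
  have p1: "(norm z)^2 + \<eta>^2/4 \<le> (2 * x0)^2" using parallelogram3[OF c2 c1] nu by simp
  have p2: "(norm z)^2 + 3 * \<eta>^2/4 \<le> (1 - 2 * x0)^2" using parallelogram3[OF c3 c4] nv by simp
  have A0: "0 \<le> 2 * x0" using N[of True True] x0_def norm_ge_zero[of "bv (G True True)"] by linarith
  have A1: "0 \<le> 1 - 2 * x0" using N[of True False] b1 norm_ge_zero[of "bv (G True False)"] by linarith
  define g where "g = 1 + \<eta>^4/4 - 2*\<eta>^2"
  have g0: "0 \<le> g" using g_nonneg[OF e] g_def by simp
  define c where "c = sqrt g / 2"
  define a where "a = 1/2 - \<eta>^2/4"
  have c0: "0 \<le> c" unfolding c_def using g0 by simp
  have csq: "c^2 = g / 4" unfolding c_def power_divide real_sqrt_pow2[OF g0] by simp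
  have eta1: "\<eta> \<le> 1"
  proof -
    have "sqrt 3 \<le> sqrt 4" by (rule real_sqrt_le_mono) simp
    then have "sqrt 3 \<le> 2" using real_sqrt_four by simp
    then show ?thesis using e by linarith
  qed
  have "\<eta>^2 \<le> 1" using eta1 e by (simp add: power_le_one)
  then have a0: "0 \<le> a" "0 \<le> 1 - a" unfolding a_def by auto
  have ea1: "a^2 = c^2 + \<eta>^2/4" unfolding csq a_def g_def by (simp add: power2_eq_square power4_eq_xxxx field_simps)
  have ea2: "(1 - a)^2 = c^2 + 3*\<eta>^2/4" unfolding csq a_def g_def by (simp add: power2_eq_square power4_eq_xxxx field_simps)
  have "a - c \<le> 2 * x0 - norm z"
    by (rule key_real[of "\<eta>^2/4" "2*x0" "norm z" c a "3*\<eta>^2/4"]) (use A0 A1 c0 a0 ea1 ea2 p1 p2 in auto)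
  then show ?thesis using T2 unfolding a_def c_def g_def by simp
qed


lemma herm_eq: assumes "herm A" "herm B" "b0 A = b0 B" "bv A = bv B" shows "A = B"
proof -
  obtain p b w where A: "A = mat2 (complex_of_real p) b (cnj b) (complex_of_real w)"
    using herm_form[OF assms(1)] by blast
  obtain p' b' w' where B: "B = mat2 (complex_of_real p') b' (cnj b') (complex_of_real w')"
    using herm_form[OF assms(2)] by blast
  have "p + w = p' + w'" using assms(3) unfolding A B b0_mat2 by simp
  moreover have "Re b = Re b'" "Im b = Im b'" "p - w = p' - w'"
    using assms(4) unfolding A B bv_mat2 vec3_eq by simp_all
  ultimately have "p = p'" "w = w'" "b = b'" by (auto simp: complex_eq_iff)
  then show ?thesis using A B by simp
qed

lemma gen_bloch: fixes k :: real and w :: "real^3"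
  shows "herm ((1/2) *\<^sub>M (complex_of_real k *\<^sub>M Id2 + (1/2) *\<^sub>M sigma_dot w))"
    "b0 ((1/2) *\<^sub>M (complex_of_real k *\<^sub>M Id2 + (1/2) *\<^sub>M sigma_dot w)) = k/2"
    "bv ((1/2) *\<^sub>M (complex_of_real k *\<^sub>M Id2 + (1/2) *\<^sub>M sigma_dot w)) = (1/4) *\<^sub>R w"
  by (simp_all add: mat2_simps herm_mat2 b0_mat2 bv_mat2 vec3_eq complex_eq_iff) (simp_all add: field_simps)

lemma Gpar_bloch:
  "herm (Gpar \<eta> ni nj \<alpha> a x y)"
  "b0 (Gpar \<eta> ni nj \<alpha> a x y) = (if x = y then \<alpha>/4 else (1 - \<alpha>/2)/2)"
  "bv (Gpar \<eta> ni nj \<alpha> a x y) = (1/4) *\<^sub>R (if x \<and> y then \<eta> *\<^sub>R (ni + nj) - a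
      else if x \<and> \<not> y then \<eta> *\<^sub>R (ni - nj) + a else if \<not> x \<and> y then \<eta> *\<^sub>R (nj - ni) + a
      else - (\<eta> *\<^sub>R (ni + nj)) - a)"
  by (cases x; cases y; simp only: Gpar_def simp_thms if_True if_False gen_bloch; simp)+

lemma E_herm: "herm (E \<eta> n x)"
  by (cases x; simp add: E_T E_F herm_mat2 complex_eq_iff)

lemma Id2_bloch: "herm Id2" "b0 Id2 = 1" "bv Id2 = 0"
  by (simp_all add: Id2_mat2 herm_mat2 b0_mat2 bv_mat2 vec3_eq)

lemma proj_psi: "proj psi_opt = mat2 (1/2) (- \<i>/2) (\<i>/2) (1/2)"
proof -
  have h: "complex_of_real (1 / sqrt 2) * complex_of_real (1 / sqrt 2) = 1/2"
    by (simp flip: of_real_mult)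
  have h2: "complex_of_real (sqrt 2) * complex_of_real (sqrt 2) = 2"
    by (simp flip: of_real_mult)
  show ?thesis
    apply (subst mat2_eta)
    by (simp add: proj_def psi_opt_def ket0_def ket1_def mat2_eq_iff h h2 algebra_simps)
qed

lemma psi_bloch: "herm (proj psi_opt)" "b0 (proj psi_opt) = 1/2" "bv (proj psi_opt) = vector [0, 1/2, 0]"
  by (simp_all add: proj_psi herm_mat2 b0_mat2 bv_mat2 vec3_eq complex_eq_iff)

lemma norm_y: "norm (vector [0, t, 0] :: real^3) = \<bar>t\<bar>"
  by (simp add: norm_eq_sqrt_inner inner3)

lemma density_psi: "density (proj psi_opt)"
proof -
  have "psd (proj psi_opt)" unfolding psd_iff psi_bloch norm_y using psi_bloch by simp
  moreover have "trace (proj psi_opt) = 1" by (simp add: proj_psi trace_mat2)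
  ultimately show ?thesis by (simp add: density_def)
qed


lemma Gpar_joint:
  assumes n1: "norm (\<eta> *\<^sub>R (ni + nj) - a) \<le> \<alpha>" and n2: "norm (- (\<eta> *\<^sub>R (ni + nj)) - a) \<le> \<alpha>"
    and n3: "norm (\<eta> *\<^sub>R (ni - nj) + a) \<le> 2 - \<alpha>" and n4: "norm (\<eta> *\<^sub>R (nj - ni) + a) \<le> 2 - \<alpha>"
  shows "joint_meas \<eta> ni nj (Gpar \<eta> ni nj \<alpha> a)"
proof -
  let ?G = "Gpar \<eta> ni nj \<alpha> a"
  have HG: "herm (?G x y)" for x y by (rule Gpar_bloch)
  have B0: "b0 (?G True True) = \<alpha>/4" "b0 (?G False False) = \<alpha>/4"
    "b0 (?G True False) = (1 - \<alpha>/2)/2" "b0 (?G False True) = (1 - \<alpha>/2)/2"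
    by (simp_all only: Gpar_bloch) simp_all
  have BV: "bv (?G True True) = (1/4) *\<^sub>R (\<eta> *\<^sub>R (ni + nj) - a)"
    "bv (?G False False) = (1/4) *\<^sub>R (- (\<eta> *\<^sub>R (ni + nj)) - a)"
    "bv (?G True False) = (1/4) *\<^sub>R (\<eta> *\<^sub>R (ni - nj) + a)"
    "bv (?G False True) = (1/4) *\<^sub>R (\<eta> *\<^sub>R (nj - ni) + a)"
    by (simp_all only: Gpar_bloch) simp_all
  have P: "psd (?G x y)" for x y
  proof -
    have "norm (bv (?G x y)) \<le> b0 (?G x y)"
      using n1 n2 n3 n4 by (cases x; cases y) (simp_all only: B0 BV, simp_all)
    then show ?thesis unfolding psd_iff using HG by simp
  qed
  have sum4: "?G True True + ?G True False + ?G False True + ?G False False = Id2"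
  proof (rule herm_eq)
    show "herm (?G True True + ?G True False + ?G False True + ?G False False)"
      by (intro herm_add HG)
    show "herm Id2" by (rule Id2_bloch)
    show "b0 (?G True True + ?G True False + ?G False True + ?G False False) = b0 Id2"
      unfolding b0_add B0 Id2_bloch by (simp add: field_simps)
    show "bv (?G True True + ?G True False + ?G False True + ?G False False) = bv Id2"
      unfolding bv_add BV Id2_bloch by (simp add: vec3_eq algebra_simps)
  qed
  have m1: "?G x True + ?G x False = E \<eta> ni x" for x
  proof (rule herm_eq)
    show "herm (?G x True + ?G x False)" by (intro herm_add HG)
    show "herm (E \<eta> ni x)" by (rule E_herm)
    show "b0 (?G x True + ?G x False) = b0 (E \<eta> ni x)"
      unfolding b0_add E_bloch by (cases x) (simp_all only: B0, simp_all add: field_simps)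
    show "bv (?G x True + ?G x False) = bv (E \<eta> ni x)"
      unfolding bv_add E_bloch by (cases x) (simp_all only: BV, simp_all add: vec3_eq algebra_simps)
  qed
  have m2: "?G True y + ?G False y = E \<eta> nj y" for y
  proof (rule herm_eq)
    show "herm (?G True y + ?G False y)" by (intro herm_add HG)
    show "herm (E \<eta> nj y)" by (rule E_herm)
    show "b0 (?G True y + ?G False y) = b0 (E \<eta> nj y)"
      unfolding b0_add E_bloch by (cases y) (simp_all only: B0, simp_all add: field_simps)
    show "bv (?G True y + ?G False y) = bv (E \<eta> nj y)"
      unfolding bv_add E_bloch by (cases y) (simp_all only: BV, simp_all add: vec3_eq algebra_simps)
  qed
  show ?thesis unfolding joint_meas_def povm4_def using P sum4 m1 m2 by blast
qed

lemma Gopt_joint: fixes ni nj :: "real^3"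
  assumes u: "norm ni = 1" "norm nj = 1" "ni $ 2 = 0" "nj $ 2 = 0" "ni \<bullet> nj = -1/2"
    and e: "0 < \<eta>" "\<eta> \<le> sqrt 3 - 1"
  shows "joint_meas \<eta> ni nj (G_opt \<eta> ni nj)"
proof -
  define g where "g = 1 + \<eta>^4/4 - 2*\<eta>^2"
  have g0: "0 \<le> g" using g_nonneg[OF e] g_def by simp
  define c where "c = sqrt g"
  have c2: "c^2 = g" unfolding c_def using g0 by simp
  have ao: "a_opt \<eta> ni nj = vector [0, c, 0]" unfolding a_opt_def c_def g_def u(5)
    by (simp add: power2_eq_square)
  have al: "alpha_opt \<eta> ni nj = 1 - \<eta>^2/2" unfolding alpha_opt_def u(5) by simp
  define a :: "real^3" where "a = vector [0, c, 0]"
  have na: "(norm a)^2 = g" unfolding a_def norm_y using c2 by simp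
  have o1: "ni \<bullet> a = 0" "nj \<bullet> a = 0" unfolding a_def inner3 using u by simp_all
  have nm: "(norm (ni + nj))^2 = 1" using norm_sum_sq[of ni nj] u by simp
  have nd: "(norm (ni - nj))^2 = 3" using norm_diff_sq[of ni nj] u by simp
  have nd': "(norm (nj - ni))^2 = 3" using norm_diff_sq[of nj ni] u by (simp add: inner_commute)
  have eta1: "\<eta> \<le> 1"
  proof -
    have "sqrt 3 \<le> sqrt 4" by (rule real_sqrt_le_mono) simp
    then have "sqrt 3 \<le> 2" using real_sqrt_four by simp
    then show ?thesis using e by linarith
  qed
  have "\<eta>^2 \<le> 1" using eta1 e by (simp add: power_le_one)
  then have al0: "0 \<le> 1 - \<eta>^2/2" "0 \<le> 2 - (1 - \<eta>^2/2)" by auto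
  have sq: "norm v \<le> b" if "(norm v)^2 = b^2" "0 \<le> b" for v :: "real^3" and b :: real
    using that by (simp add: norm_le_square power2_norm_eq_inner)
  have ip: "(p \<bullet> a) = 0" if "p $ 2 = 0" for p :: "real^3" unfolding a_def inner3 using that by simp
  have n1: "norm (\<eta> *\<^sub>R (ni + nj) - a) \<le> 1 - \<eta>^2/2"
  proof (rule sq[OF _ al0(1)])
    have "(norm (\<eta> *\<^sub>R (ni + nj) - a))^2 = \<eta>^2 * 1 + g - 2 * ((\<eta> *\<^sub>R (ni + nj)) \<bullet> a)"
      unfolding norm_diff_sq na using nm by (simp add: power_mult_distrib)
    also have "(\<eta> *\<^sub>R (ni + nj)) \<bullet> a = 0" by (rule ip) (simp add: u)
    finally show "(norm (\<eta> *\<^sub>R (ni + nj) - a))^2 = (1 - \<eta>^2/2)^2"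
      unfolding g_def by (simp add: power2_eq_square power4_eq_xxxx field_simps)
  qed
  have n2: "norm (- (\<eta> *\<^sub>R (ni + nj)) - a) \<le> 1 - \<eta>^2/2"
  proof (rule sq[OF _ al0(1)])
    have "(norm (- (\<eta> *\<^sub>R (ni + nj)) - a))^2 = \<eta>^2 * 1 + g - 2 * ((- (\<eta> *\<^sub>R (ni + nj))) \<bullet> a)"
      unfolding norm_diff_sq na using nm by (simp add: power_mult_distrib)
    also have "(- (\<eta> *\<^sub>R (ni + nj))) \<bullet> a = 0" by (rule ip) (simp add: u)
    finally show "(norm (- (\<eta> *\<^sub>R (ni + nj)) - a))^2 = (1 - \<eta>^2/2)^2"
      unfolding g_def by (simp add: power2_eq_square power4_eq_xxxx field_simps)
  qed
  have n3: "norm (\<eta> *\<^sub>R (ni - nj) + a) \<le> 2 - (1 - \<eta>^2/2)"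
  proof (rule sq[OF _ al0(2)])
    have "(norm (\<eta> *\<^sub>R (ni - nj) + a))^2 = \<eta>^2 * 3 + g + 2 * ((\<eta> *\<^sub>R (ni - nj)) \<bullet> a)"
      unfolding norm_sum_sq na using nd by (simp add: power_mult_distrib)
    also have "(\<eta> *\<^sub>R (ni - nj)) \<bullet> a = 0" by (rule ip) (simp add: u)
    finally show "(norm (\<eta> *\<^sub>R (ni - nj) + a))^2 = (2 - (1 - \<eta>^2/2))^2"
      unfolding g_def by (simp add: power2_eq_square power4_eq_xxxx field_simps)
  qed
  have n4: "norm (\<eta> *\<^sub>R (nj - ni) + a) \<le> 2 - (1 - \<eta>^2/2)"
  proof (rule sq[OF _ al0(2)])
    have "(norm (\<eta> *\<^sub>R (nj - ni) + a))^2 = \<eta>^2 * 3 + g + 2 * ((\<eta> *\<^sub>R (nj - ni)) \<bullet> a)"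
      unfolding norm_sum_sq na using nd' by (simp add: power_mult_distrib)
    also have "(\<eta> *\<^sub>R (nj - ni)) \<bullet> a = 0" by (rule ip) (simp add: u)
    finally show "(norm (\<eta> *\<^sub>R (nj - ni) + a))^2 = (2 - (1 - \<eta>^2/2))^2"
      unfolding g_def by (simp add: power2_eq_square power4_eq_xxxx field_simps)
  qed
  show ?thesis unfolding G_opt_def ao al a_def[symmetric]
    by (rule Gpar_joint[OF n1 n2 n3 n4])
qed

lemma final_bound: fixes \<eta> :: real assumes e: "2/3 < \<eta>" "\<eta> \<le> sqrt 3 - 1"
  shows "1/2 + \<eta>^2/4 + sqrt (1 + \<eta>^4/4 - 2*\<eta>^2)/2 - (1 - \<eta>/3) \<le> (1/6) * (sqrt 13 / 3 - 1)"
proof -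
  define s where "s = sqrt 13"
  have s2: "s^2 = 13" unfolding s_def by simp
  have s3: "3 \<le> s" unfolding s_def by (rule real_le_rsqrt) simp
  have s4: "s \<le> 4" unfolding s_def by (rule real_sqrt_le_iff[THEN iffD2, of 13 16, simplified]) 
  have e34: "\<eta> \<le> 3/4"
  proof -
    have "sqrt 3 \<le> sqrt (49/16)" by (rule real_sqrt_le_mono) simp
    also have "sqrt (49/16) = 7/4" by (rule real_sqrt_unique) (simp_all add: power2_eq_square)
    finally show ?thesis using e by linarith
  qed
  define K where "K = 1/3 + s/18"
  define R where "R = K - \<eta>^2/4 - \<eta>/3"
  define g where "g = 1 + \<eta>^4/4 - 2*\<eta>^2"
  have "\<eta>^2 \<le> (3/4)^2" using e e34 by (intro power_mono) simp_all
  then have R0: "0 \<le> R" unfolding R_def K_def using s3 e34 by (simp add: power2_eq_square)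
  have id: "R^2 - g/4 - (\<eta> - 2/3)*(\<eta>^2/6 + (20 - s)/36 * \<eta> + (4/27 - s/18)) = (s^2 - 13)/324"
    unfolding R_def K_def g_def by (simp add: power2_eq_square power4_eq_xxxx field_simps)
  have p0: "0 \<le> \<eta>^2/6 + (20 - s)/36 * \<eta> + (4/27 - s/18)"
  proof -
    have "(20 - s)/36 * (2/3) \<le> (20 - s)/36 * \<eta>" using e s4 by (intro mult_left_mono) simp_all
    moreover have "0 \<le> \<eta>^2/6" by simp
    moreover have "0 \<le> (20 - s)/36 * (2/3) + (4/27 - s/18)" using s4 by (simp add: field_simps)
    ultimately show ?thesis by linarith
  qed
  have "0 \<le> (\<eta> - 2/3)*(\<eta>^2/6 + (20 - s)/36 * \<eta> + (4/27 - s/18))"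
    using p0 e by simp
  then have "g \<le> (2*R)^2" using id s2 by (simp add: power_mult_distrib)
  then have "sqrt g \<le> sqrt ((2*R)^2)" by (rule real_sqrt_le_mono)
  also have "\<dots> = 2 * R" using R0 by (simp only: real_sqrt_abs)
  finally have "sqrt g / 2 \<le> R" by simp
  then show ?thesis unfolding g_def[symmetric] s_def[symmetric] using R_def K_def by (simp add: field_simps)
qed

lemma sqrt13: "sqrt (13/81) = sqrt 13 / 9"
proof -
  have "sqrt 81 = (9::real)" by (rule real_sqrt_unique) simp_all
  then show ?thesis by (simp add: real_sqrt_divide)
qed

lemma Tr_opt: "Re (trace (proj psi_opt ** (G_opt \<eta> ni nj True False + G_opt \<eta> ni nj False True)))
   = 1 - alpha_opt \<eta> ni nj / 2 + (a_opt \<eta> ni nj) $ 2 / 2"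
proof -
  let ?G = "G_opt \<eta> ni nj"
  have HG: "herm (?G x y)" for x y unfolding G_opt_def by (rule Gpar_bloch)
  have "Re (trace (proj psi_opt ** (?G True False + ?G False True)))
     = 2 * (b0 (proj psi_opt) * b0 (?G True False + ?G False True) + bv (proj psi_opt) \<bullet> bv (?G True False + ?G False True))"
    by (rule trace_bloch[OF psi_bloch(1) herm_add[OF HG HG]])
  also have "\<dots> = 1 - alpha_opt \<eta> ni nj / 2 + (a_opt \<eta> ni nj) $ 2 / 2"
    unfolding b0_add bv_add psi_bloch G_opt_def
    by (simp only: Gpar_bloch) (simp add: inner3 field_simps)
  finally show ?thesis .
qed

lemma Tr_opt2: assumes "ni \<bullet> nj = -1/2"
  shows "Re (trace (proj psi_opt ** (G_opt \<eta> ni nj True False + G_opt \<eta> ni nj False True)))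
   = 1/2 + \<eta>^2/4 + sqrt (1 + \<eta>^4/4 - 2*\<eta>^2) / 2"
  unfolding Tr_opt alpha_opt_def a_opt_def assms by (simp add: power2_eq_square field_simps)

lemma S_opt: assumes "n1 \<bullet> n2 = -1/2" "n2 \<bullet> n3 = -1/2" "n1 \<bullet> n3 = -1/2"
  shows "S \<eta> (proj psi_opt) (G_opt \<eta> n1 n2) (G_opt \<eta> n2 n3) (G_opt \<eta> n1 n3)
    = 1/2 + \<eta>^2/4 + sqrt (1 + \<eta>^4/4 - 2*\<eta>^2)/2 - (1 - \<eta>/3)"
  unfolding S_def Tr_opt2[OF assms(1)] Tr_opt2[OF assms(2)] Tr_opt2[OF assms(3)] by (simp add: field_simps)

lemma lim_pair: assumes "ni \<bullet> nj = -1/2"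
  shows "((\<lambda>\<eta>. alpha_opt \<eta> ni nj) \<longlongrightarrow> 7/9) (at_right (2/3))"
    "((\<lambda>\<eta>. norm (a_opt \<eta> ni nj)) \<longlongrightarrow> sqrt 13 / 9) (at_right (2/3))"
proof -
  have "((\<lambda>\<eta>::real. 1 + \<eta>^2 * (-1/2)) \<longlongrightarrow> 1 + (2/3)^2 * (-1/2)) (at_right (2/3))"
    by (auto intro!: tendsto_intros)
  then show "((\<lambda>\<eta>. alpha_opt \<eta> ni nj) \<longlongrightarrow> 7/9) (at_right (2/3))"
    unfolding alpha_opt_def assms by (simp add: power2_eq_square)
  have "((\<lambda>\<eta>::real. \<bar>sqrt (1 + \<eta>^4/4 - 2*\<eta>^2)\<bar>) \<longlongrightarrow> \<bar>sqrt (1 + (2/3)^4/4 - 2*(2/3)^2)\<bar>) (at_right (2/3))"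
    by (auto intro!: tendsto_intros)
  moreover have "\<bar>sqrt (1 + (2/3::real)^4/4 - 2*(2/3)^2)\<bar> = sqrt 13 / 9"
    using sqrt13 by (simp add: power4_eq_xxxx power2_eq_square)
  moreover have "norm (a_opt \<eta> ni nj) = \<bar>sqrt (1 + \<eta>^4/4 - 2*\<eta>^2)\<bar>" for \<eta>
    unfolding a_opt_def norm_y assms by (simp add: power2_eq_square)
  ultimately show "((\<lambda>\<eta>. norm (a_opt \<eta> ni nj)) \<longlongrightarrow> sqrt 13 / 9) (at_right (2/3))" by simp
qed

lemma lim_S: "((\<lambda>\<eta>::real. 1/2 + \<eta>^2/4 + sqrt (1 + \<eta>^4/4 - 2*\<eta>^2)/2 - (1 - \<eta>/3))
     \<longlongrightarrow> (1/6) * (sqrt 13 / 3 - 1)) (at_right (2/3))"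
proof -
  have L: "((\<lambda>\<eta>::real. 1/2 + \<eta>^2/4 + sqrt (1 + \<eta>^4/4 - 2*\<eta>^2)/2 - (1 - \<eta>/3))
     \<longlongrightarrow> 1/2 + (2/3)^2/4 + sqrt (1 + (2/3)^4/4 - 2*(2/3)^2)/2 - (1 - (2/3)/3)) (at_right (2/3))"
    by (intro tendsto_intros) simp_all
  have eq: "1/2 + (2/3::real)^2/4 + sqrt (1 + (2/3)^4/4 - 2*(2/3)^2)/2 - (1 - (2/3)/3) = (1/6) * (sqrt 13 / 3 - 1)"
    using sqrt13 by (simp add: power4_eq_xxxx power2_eq_square field_simps)
  show ?thesis unfolding eq[symmetric] by (rule L)
qed

lemma avg3: fixes x y z T k :: real assumes "x \<le> T" "y \<le> T" "z \<le> T"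
  shows "(1/3) * (x + y + z) - k \<le> T - k"
proof -
  have "x + y + z \<le> 3 * T" using assms by linarith
  then have "(1/3) * (x + y + z) \<le> (1/3) * (3 * T)" by (rule mult_left_mono) simp
  then show ?thesis by simp
qed

theorem mainTheorem2:
  fixes n1 n2 n3 :: "real^3"
  assumes unit: "norm n1 = 1" "norm n2 = 1" "norm n3 = 1"
    and zx: "n1$2 = 0" "n2$2 = 0" "n3$2 = 0"
    and trine: "n1 \<bullet> n2 = -1/2" "n2 \<bullet> n3 = -1/2" "n1 \<bullet> n3 = -1/2"
  shows
    "(\<forall>\<eta>. 2/3 < \<eta> \<and> \<eta> \<le> sqrt 3 - 1 \<longrightarrow>
        density (proj psi_opt) \<and>
        joint_meas \<eta> n1 n2 (G_opt \<eta> n1 n2) \<and>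
        joint_meas \<eta> n2 n3 (G_opt \<eta> n2 n3) \<and>
        joint_meas \<eta> n1 n3 (G_opt \<eta> n1 n3) \<and>
        (\<forall>\<rho> G12 G23 G13. density \<rho> \<and> joint_meas \<eta> n1 n2 G12 \<and>
            joint_meas \<eta> n2 n3 G23 \<and> joint_meas \<eta> n1 n3 G13 \<longrightarrow>
            S \<eta> \<rho> G12 G23 G13
              \<le> S \<eta> (proj psi_opt) (G_opt \<eta> n1 n2) (G_opt \<eta> n2 n3) (G_opt \<eta> n1 n3)))
     \<and> (\<forall>(ni, nj) \<in> {(n1, n2), (n2, n3), (n1, n3)}.
          ((\<lambda>\<eta>. alpha_opt \<eta> ni nj) \<longlongrightarrow> 7/9) (at_right (2/3)) \<and>
          ((\<lambda>\<eta>. norm (a_opt \<eta> ni nj)) \<longlongrightarrow> sqrt 13 / 9) (at_right (2/3)))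
     \<and> ((\<lambda>\<eta>. S \<eta> (proj psi_opt) (G_opt \<eta> n1 n2) (G_opt \<eta> n2 n3) (G_opt \<eta> n1 n3))
          \<longlongrightarrow> (1/6) * (sqrt 13 / 3 - 1)) (at_right (2/3))
     \<and> (\<forall>\<eta>. 2/3 < \<eta> \<and> \<eta> \<le> sqrt 3 - 1 \<longrightarrow>
          S \<eta> (proj psi_opt) (G_opt \<eta> n1 n2) (G_opt \<eta> n2 n3) (G_opt \<eta> n1 n3)
            \<le> (1/6) * (sqrt 13 / 3 - 1))"
proof -
  let ?T = "\<lambda>\<eta>::real. 1/2 + \<eta>^2/4 + sqrt (1 + \<eta>^4/4 - 2*\<eta>^2)/2"
  have P1: "density (proj psi_opt) \<and>
        joint_meas \<eta> n1 n2 (G_opt \<eta> n1 n2) \<and>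
        joint_meas \<eta> n2 n3 (G_opt \<eta> n2 n3) \<and>
        joint_meas \<eta> n1 n3 (G_opt \<eta> n1 n3) \<and>
        (\<forall>\<rho> G12 G23 G13. density \<rho> \<and> joint_meas \<eta> n1 n2 G12 \<and>
            joint_meas \<eta> n2 n3 G23 \<and> joint_meas \<eta> n1 n3 G13 \<longrightarrow>
            S \<eta> \<rho> G12 G23 G13
              \<le> S \<eta> (proj psi_opt) (G_opt \<eta> n1 n2) (G_opt \<eta> n2 n3) (G_opt \<eta> n1 n3))"
    if h: "2/3 < \<eta> \<and> \<eta> \<le> sqrt 3 - 1" for \<eta>
  proof -
    from h have e: "0 < \<eta>" "\<eta> \<le> sqrt 3 - 1" by auto
    have opt: "\<forall>\<rho> G12 G23 G13. density \<rho> \<and> joint_meas \<eta> n1 n2 G12 \<and>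
            joint_meas \<eta> n2 n3 G23 \<and> joint_meas \<eta> n1 n3 G13 \<longrightarrow>
            S \<eta> \<rho> G12 G23 G13
              \<le> S \<eta> (proj psi_opt) (G_opt \<eta> n1 n2) (G_opt \<eta> n2 n3) (G_opt \<eta> n1 n3)"
    proof (intro allI impI)
      fix \<rho> G12 G23 G13
      assume H: "density \<rho> \<and> joint_meas \<eta> n1 n2 G12 \<and> joint_meas \<eta> n2 n3 G23 \<and> joint_meas \<eta> n1 n3 G13"
      have D: "density \<rho>" and J1: "joint_meas \<eta> n1 n2 G12" and J2: "joint_meas \<eta> n2 n3 G23"
        and J3: "joint_meas \<eta> n1 n3 G13" using H by auto
      have b1: "Re (trace (\<rho> ** (G12 True False + G12 False True))) \<le> ?T \<eta>"
        by (rule pair_bound[OF J1 D unit(1) unit(2) trine(1) e])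
      have b2: "Re (trace (\<rho> ** (G23 True False + G23 False True))) \<le> ?T \<eta>"
        by (rule pair_bound[OF J2 D unit(2) unit(3) trine(2) e])
      have b3: "Re (trace (\<rho> ** (G13 True False + G13 False True))) \<le> ?T \<eta>"
        by (rule pair_bound[OF J3 D unit(1) unit(3) trine(3) e])
      show "S \<eta> \<rho> G12 G23 G13 \<le> S \<eta> (proj psi_opt) (G_opt \<eta> n1 n2) (G_opt \<eta> n2 n3) (G_opt \<eta> n1 n3)"
        unfolding S_opt[OF trine] unfolding S_def by (rule avg3[OF b1 b2 b3])
    qed
    show ?thesis using density_psi opt
      Gopt_joint[OF unit(1) unit(2) zx(1) zx(2) trine(1) e]
      Gopt_joint[OF unit(2) unit(3) zx(2) zx(3) trine(2) e]
      Gopt_joint[OF unit(1) unit(3) zx(1) zx(3) trine(3) e] by blast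
  qed
  have P2: "\<forall>(ni, nj) \<in> {(n1, n2), (n2, n3), (n1, n3)}.
          ((\<lambda>\<eta>. alpha_opt \<eta> ni nj) \<longlongrightarrow> 7/9) (at_right (2/3)) \<and>
          ((\<lambda>\<eta>. norm (a_opt \<eta> ni nj)) \<longlongrightarrow> sqrt 13 / 9) (at_right (2/3))"
    using lim_pair[OF trine(1)] lim_pair[OF trine(2)] lim_pair[OF trine(3)] by auto
  have P3: "((\<lambda>\<eta>. S \<eta> (proj psi_opt) (G_opt \<eta> n1 n2) (G_opt \<eta> n2 n3) (G_opt \<eta> n1 n3))
          \<longlongrightarrow> (1/6) * (sqrt 13 / 3 - 1)) (at_right (2/3))"
    unfolding S_opt[OF trine] by (rule lim_S)
  have P4: "\<forall>\<eta>. 2/3 < \<eta> \<and> \<eta> \<le> sqrt 3 - 1 \<longrightarrow>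
          S \<eta> (proj psi_opt) (G_opt \<eta> n1 n2) (G_opt \<eta> n2 n3) (G_opt \<eta> n1 n3)
            \<le> (1/6) * (sqrt 13 / 3 - 1)"
    unfolding S_opt[OF trine] using final_bound by blast
  show ?thesis using P1 P2 P3 P4 by blast
qed

end
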